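(* Let $\mathcal{L} \subset \mathbb{R}^n$ be a stable full-rank lattice such that every decomposition $\mathcal{L} \cong \mathcal{L}_1 \oplus \mathcal{L}_2$ with $\mathcal{L}_2$ non-trivial and indecomposable has $\mathrm{rank}(\mathcal{L}_2) = 1$. Then $\mathcal{L} \cong \mathbb{Z}^n$.
   Context: A lattice of rank $d$ is the set of integer combinations of $d$ linearly independent vectors $\mathbf{B}\in\mathbb{R}^{n\times d}$; $\det(\mathcal{L})=\sqrt{\det(\mathbf{B}^T\mathbf{B})}$, $\det(\{\vec 0\}):=1$. A sublattice is any additive subgroup. A lattice $\mathcal{L}$ is stable if $\det(\mathcal{L}) = 1$ and $\det(\mathcal{L}') \geq 1$ for all sublattices $\mathcal{L}' \subseteq \mathcal{L}$. The direct sum $\oplus$ of lattices is the orthogonal direct sum; $\cong$ means isomorphic via a linear isometry. A lattice is decomposable if it is isomorphic to a direct sum of non-trivial lattices of strictly lower rank, and indecomposable otherwise; $\mathcal{L}_1$ may be the trivial lattice $\{\vec 0\}$. *)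

theory Defs
  imports "HOL-Analysis.Analysis"
begin

definition lattice_basis :: "'a::euclidean_space list \<Rightarrow> 'a set \<Rightarrow> bool" where
  "lattice_basis bs L \<longleftrightarrow> distinct bs \<and> independent (set bs) \<and>
     L = {\<Sum>i<length bs. c i *\<^sub>R bs ! i | c. \<forall>i<length bs. c i \<in> \<int>}"

definition is_lattice :: "'a::euclidean_space set \<Rightarrow> bool" where
  "is_lattice L \<longleftrightarrow> (\<exists>bs. lattice_basis bs L)"

definition lattice_rank :: "'a::euclidean_space set \<Rightarrow> nat" where
  "lattice_rank L = dim L"

definition det_fin :: "nat \<Rightarrow> (nat \<Rightarrow> nat \<Rightarrow> real) \<Rightarrow> real" where
  "det_fin d G = (\<Sum>p | p permutes {..<d}. of_int (sign p) * (\<Prod>i<d. G i (p i)))"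

definition lattice_det :: "'a::euclidean_space set \<Rightarrow> real" where
  "lattice_det L = (if L = {0} then 1 else
     (let bs = (SOME bs. lattice_basis bs L) in
      sqrt (det_fin (length bs) (\<lambda>i j. inner (bs ! i) (bs ! j)))))"

text \<open>Sublattice = additive subgroup.\<close>
definition additive_subgroup :: "'a::euclidean_space set \<Rightarrow> bool" where
  "additive_subgroup S \<longleftrightarrow> 0 \<in> S \<and> (\<forall>x\<in>S. \<forall>y\<in>S. x + y \<in> S) \<and> (\<forall>x\<in>S. - x \<in> S)"

definition stable_lattice :: "'a::euclidean_space set \<Rightarrow> bool" where
  "stable_lattice L \<longleftrightarrow> is_lattice L \<and> lattice_det L = 1 \<and>
     (\<forall>L'. L' \<subseteq> L \<and> additive_subgroup L' \<longrightarrow> lattice_det L' \<ge> 1)"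

definition lattice_iso :: "'a::euclidean_space set \<Rightarrow> 'b::euclidean_space set \<Rightarrow> bool" where
  "lattice_iso L M \<longleftrightarrow> (\<exists>f::'a \<Rightarrow> 'b. linear f \<and> (\<forall>x\<in>span L. norm (f x) = norm x) \<and> f ` L = M)"

text \<open>Orthogonal direct sum, realised in the product space.\<close>
definition lattice_dsum :: "'a::euclidean_space set \<Rightarrow> 'b::euclidean_space set \<Rightarrow> ('a \<times> 'b) set" where
  "lattice_dsum L1 L2 = L1 \<times> L2"

text \<open>Decomposable: isomorphic to a direct sum of non-trivial lattices of strictly
  lower rank (such lattices can always be realised inside the ambient space of L).\<close>
definition decomposable :: "'a::euclidean_space set \<Rightarrow> bool" where
  "decomposable L \<longleftrightarrow> (\<exists>(M1::'a set) (M2::'a set). is_lattice M1 \<and> is_lattice M2 \<and>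
     M1 \<noteq> {0} \<and> M2 \<noteq> {0} \<and> lattice_rank M1 < lattice_rank L \<and>
     lattice_rank M2 < lattice_rank L \<and> lattice_iso L (lattice_dsum M1 M2))"

definition indecomposable :: "'a::euclidean_space set \<Rightarrow> bool" where
  "indecomposable L \<longleftrightarrow> \<not> decomposable L"

definition int_lattice :: "(real^'n) set" where
  "int_lattice = {x. \<forall>i. x $ i \<in> \<int>}"

end

theory Submission
  imports Defs "Jordan_Normal_Form.Determinant"
begin
definition orth :: "'a::euclidean_space set \<Rightarrow> 'a set \<Rightarrow> bool" where
  "orth X Y \<longleftrightarrow> (\<forall>x\<in>X. \<forall>y\<in>Y. inner x y = 0)"

definition osum :: "'a::euclidean_space set \<Rightarrow> 'a set \<Rightarrow> 'a set" where
  "osum X Y = {x + y | x y. x \<in> X \<and> y \<in> Y}"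

lemma orth_span:
  assumes "orth X Y" "x \<in> span X" "y \<in> span Y"
  shows "inner x y = 0"
proof -
  have s1: "subspace {x. \<forall>y\<in>Y. inner x y = 0}"
    by (auto simp: subspace_def inner_add_left)
  have "span X \<subseteq> {x. \<forall>y\<in>Y. inner x y = 0}"
    using assms(1) by (intro span_minimal[OF _ s1]) (auto simp: orth_def)
  hence h: "\<forall>y\<in>Y. inner x y = 0" using assms(2) by auto
  have s2: "subspace {y. inner x y = 0}"
    by (auto simp: subspace_def inner_add_right)
  have "span Y \<subseteq> {y. inner x y = 0}"
    using h by (intro span_minimal[OF _ s2]) auto
  thus ?thesis using assms(3) by auto
qed

lemma lb_mem:
  assumes "lattice_basis bs X" "i < length bs"
  shows "bs ! i \<in> X"
proof -
  let ?c = "\<lambda>j. if j = i then (1::real) else 0"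
  have X: "X = {\<Sum>i<length bs. c i *\<^sub>R bs ! i | c. \<forall>i<length bs. c i \<in> \<int>}"
    using assms(1) unfolding lattice_basis_def by blast
  have "(\<Sum>j<length bs. ?c j *\<^sub>R bs ! j) = (\<Sum>j\<in>{..<length bs}. if j = i then bs ! j else 0)"
    by (rule sum.cong) simp_all
  also have "\<dots> = bs ! i" using assms(2) by (simp add: sum.delta)
  finally have e: "bs ! i = (\<Sum>j<length bs. ?c j *\<^sub>R bs ! j)" by (rule sym)
  have z: "\<forall>j<length bs. ?c j \<in> \<int>" by simp
  show ?thesis unfolding X
    by (rule CollectI, rule exI[of _ ?c], rule conjI[OF e z])
qed

lemma lb_set: "lattice_basis bs X \<Longrightarrow> set bs \<subseteq> X"
proof
  fix x assume a: "lattice_basis bs X" "x \<in> set bs"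
  then obtain i where "i < length bs" "x = bs ! i" by (auto simp: in_set_conv_nth)
  thus "x \<in> X" using lb_mem[OF a(1)] by simp
qed

lemma lb_sub_span: "lattice_basis bs X \<Longrightarrow> X \<subseteq> span (set bs)"
  unfolding lattice_basis_def
proof clarify
  fix c :: "nat \<Rightarrow> real"
  show "(\<Sum>i<length bs. c i *\<^sub>R bs ! i) \<in> span (set bs)"
    by (intro span_sum span_scale) (rule span_base, simp)
qed

lemma lb_span: "lattice_basis bs X \<Longrightarrow> span X = span (set bs)"
proof -
  assume a: "lattice_basis bs X"
  have "span X \<subseteq> span (set bs)"
    using span_mono[OF lb_sub_span[OF a]] by (simp add: span_span)
  moreover have "span (set bs) \<subseteq> span X" using span_mono[OF lb_set[OF a]] .
  ultimately show ?thesis by (rule antisym)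
qed

lemma lb_dim: "lattice_basis bs X \<Longrightarrow> dim X = length bs"
proof -
  assume a: "lattice_basis bs X"
  hence "dim X = card (set bs)"
    using dim_eq_card[OF lb_span[OF a, symmetric]] a by (simp add: lattice_basis_def)
  thus ?thesis using a by (simp add: lattice_basis_def distinct_card)
qed

lemma lb_zero: "lattice_basis bs X \<Longrightarrow> 0 \<in> X"
  unfolding lattice_basis_def by (auto intro!: exI[of _ "\<lambda>_. 0"])

lemma lb_add: "lattice_basis bs X \<Longrightarrow> x \<in> X \<Longrightarrow> y \<in> X \<Longrightarrow> x + y \<in> X"
  unfolding lattice_basis_def
  apply clarify
  subgoal for c d
    by (rule exI[of _ "\<lambda>i. c i + d i"]) (auto simp: scaleR_add_left sum.distrib)
  done

lemma lb_neg: "lattice_basis bs X \<Longrightarrow> x \<in> X \<Longrightarrow> - x \<in> X"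
  unfolding lattice_basis_def
  apply clarify
  subgoal for c
    by (rule exI[of _ "\<lambda>i. - c i"]) (auto simp: sum_negf)
  done

lemma lb_img:
  assumes "lattice_basis bs M" "linear h" "inj_on h (span M)"
  shows "lattice_basis (map h bs) (h ` M)"
proof -
  have sp: "span M = span (set bs)" using lb_span[OF assms(1)] .
  have "inj_on h (set bs)" using assms(3) lb_set[OF assms(1)]
    by (meson inj_on_subset span_superset subset_trans)
  hence d: "distinct (map h bs)" using assms(1) by (simp add: distinct_map lattice_basis_def)
  have i: "independent (set (map h bs))"
    using linear_independent_injective_image[OF assms(2), of "set bs"] assms sp
    by (simp add: lattice_basis_def)
  have e: "h (\<Sum>i<length bs. c i *\<^sub>R bs ! i) = (\<Sum>i<length bs. c i *\<^sub>R h (bs ! i))" for c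
    using assms(2) by (simp add: linear_sum linear_scale)
  have M: "M = {\<Sum>i<length bs. c i *\<^sub>R bs ! i | c. \<forall>i<length bs. c i \<in> \<int>}"
    using assms(1) unfolding lattice_basis_def by blast
  have "h ` M = {\<Sum>i<length (map h bs). c i *\<^sub>R map h bs ! i | c. \<forall>i<length (map h bs). c i \<in> \<int>}"
  proof safe
    fix x assume "x \<in> M"
    then obtain c where "x = (\<Sum>i<length bs. c i *\<^sub>R bs ! i)" "\<forall>i<length bs. c i \<in> \<int>"
      using M by blast
    thus "\<exists>c. h x = (\<Sum>i<length (map h bs). c i *\<^sub>R map h bs ! i) \<and> (\<forall>i<length (map h bs). c i \<in> \<int>)"
      by (intro exI[of _ c]) (simp add: e)
  next
    fix c :: "nat \<Rightarrow> real" assume "\<forall>i<length (map h bs). c i \<in> \<int>"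
    hence "(\<Sum>i<length bs. c i *\<^sub>R bs ! i) \<in> M" using M by auto
    moreover have "(\<Sum>i<length (map h bs). c i *\<^sub>R map h bs ! i) = h (\<Sum>i<length bs. c i *\<^sub>R bs ! i)"
      by (simp add: e)
    ultimately show "(\<Sum>i<length (map h bs). c i *\<^sub>R map h bs ! i) \<in> h ` M" by simp
  qed
  thus ?thesis using d i unfolding lattice_basis_def by blast
qed

lemma sum_split_nat: "(\<Sum>i<(m::nat)+k. (f i::'b::comm_monoid_add)) = (\<Sum>i<m. f i) + (\<Sum>j<k. f (m+j))"
  by (induct k) (auto simp: add_ac)

lemma norm_add_orth: "inner p q = 0 \<Longrightarrow> norm (p + q) = sqrt ((norm p)\<^sup>2 + (norm q)\<^sup>2)"
proof -
  assume a: "inner p q = 0"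
  have "(norm (p+q))\<^sup>2 = (norm p)\<^sup>2 + (norm q)\<^sup>2"
    using a by (simp add: power2_norm_eq_inner inner_add_left inner_add_right inner_commute)
  moreover have "norm (p+q) = sqrt ((norm (p+q))\<^sup>2)" by simp
  ultimately show ?thesis by simp
qed

lemma indep_union:
  assumes "independent S" "independent T" "finite S" "finite T"
    and o: "\<And>x y. x \<in> span S \<Longrightarrow> y \<in> span T \<Longrightarrow> inner x y = 0"
  shows "independent (S \<union> T)" "S \<inter> T = {}"
proof -
  show dj: "S \<inter> T = {}"
  proof (rule ccontr)
    assume "S \<inter> T \<noteq> {}"
    then obtain x where "x \<in> S" "x \<in> T" by blast
    hence "inner x x = 0" using o[OF span_base span_base] by blast
    hence "x = 0" by simp
    thus False using \<open>x \<in> S\<close> assms(1) dependent_zero by blast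
  qed
  show "independent (S \<union> T)"
  proof
    assume "dependent (S \<union> T)"
    then obtain u where u: "\<exists>v\<in>S \<union> T. u v \<noteq> 0" "(\<Sum>v\<in>S \<union> T. u v *\<^sub>R v) = 0"
      using dependent_finite[of "S \<union> T"] assms(3,4) by auto
    let ?a = "\<Sum>v\<in>S. u v *\<^sub>R v" and ?b = "\<Sum>v\<in>T. u v *\<^sub>R v"
    have "(\<Sum>v\<in>S \<union> T. u v *\<^sub>R v) = ?a + ?b" by (rule sum.union_disjoint[OF assms(3,4) dj])
    hence ab: "?a + ?b = 0" using u(2) by simp
    have sa: "?a \<in> span S" by (intro span_sum span_scale) (rule span_base)
    have sb: "?b \<in> span T" by (intro span_sum span_scale) (rule span_base)
    have an: "?a = - ?b" using ab by (simp add: eq_neg_iff_add_eq_0)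
    have "inner ?a ?a = inner ?a (- ?b)" by (subst (2) an) (rule refl)
    also have "\<dots> = 0" using o[OF sa sb] by simp
    finally have a0: "?a = 0" by simp
    hence b0: "?b = 0" using ab by simp
    have "\<forall>v\<in>S. u v = 0"
    proof (rule ccontr)
      assume "\<not> (\<forall>v\<in>S. u v = 0)"
      hence "dependent S" unfolding dependent_finite[OF assms(3)] by (intro exI[of _ u] conjI) (use a0 in auto)
      thus False using assms(1) by blast
    qed
    moreover have "\<forall>v\<in>T. u v = 0"
    proof (rule ccontr)
      assume "\<not> (\<forall>v\<in>T. u v = 0)"
      hence "dependent T" unfolding dependent_finite[OF assms(4)] by (intro exI[of _ u] conjI) (use b0 in auto)
      thus False using assms(2) by blast
    qed
    ultimately show False using u(1) by blast
  qed
qed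

lemma lb_cat:
  assumes xs: "lattice_basis xs X" and ys: "lattice_basis ys Y" and o: "orth X Y"
  shows "lattice_basis (xs @ ys) (osum X Y)"
proof -
  have o2: "inner x y = 0" if "x \<in> span (set xs)" "y \<in> span (set ys)" for x y
    by (rule orth_span[OF o]) (use that span_mono[OF lb_set[OF xs]] span_mono[OF lb_set[OF ys]] in blast)+
  have ind: "independent (set xs \<union> set ys)" "set xs \<inter> set ys = {}"
    using indep_union[of "set xs" "set ys", OF _ _ finite_set finite_set o2] xs ys unfolding lattice_basis_def by blast+
  have dist: "distinct (xs @ ys)" using ind(2) xs ys unfolding lattice_basis_def distinct_append by blast
  let ?m = "length xs" and ?k = "length ys"
  have split: "(\<Sum>i<length (xs@ys). c i *\<^sub>R (xs@ys) ! i) =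
     (\<Sum>i<?m. c i *\<^sub>R xs ! i) + (\<Sum>j<?k. c (?m + j) *\<^sub>R ys ! j)" for c
    by (simp add: sum_split_nat nth_append)
  have X: "X = {\<Sum>i<?m. c i *\<^sub>R xs ! i | c. \<forall>i<?m. c i \<in> \<int>}" using xs lattice_basis_def by blast
  have Y: "Y = {\<Sum>i<?k. c i *\<^sub>R ys ! i | c. \<forall>i<?k. c i \<in> \<int>}" using ys lattice_basis_def by blast
  have "osum X Y = {\<Sum>i<length (xs@ys). c i *\<^sub>R (xs@ys) ! i | c. \<forall>i<length (xs@ys). c i \<in> \<int>}"
  proof safe
    fix z assume "z \<in> osum X Y"
    then obtain x y where z: "z = x + y" "x \<in> X" "y \<in> Y" unfolding osum_def by blast
    obtain c where c: "x = (\<Sum>i<?m. c i *\<^sub>R xs ! i)" "\<forall>i<?m. c i \<in> \<int>" using z(2) X by blast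
    obtain d where d: "y = (\<Sum>i<?k. d i *\<^sub>R ys ! i)" "\<forall>i<?k. d i \<in> \<int>" using z(3) Y by blast
    let ?e = "\<lambda>i. if i < ?m then c i else d (i - ?m)"
    have e1: "z = (\<Sum>i<length (xs@ys). ?e i *\<^sub>R (xs@ys) ! i)"
      unfolding split z c d by simp
    have e2: "\<forall>i<length (xs@ys). ?e i \<in> \<int>" using c d by auto
    show "\<exists>c. z = (\<Sum>i<length (xs@ys). c i *\<^sub>R (xs@ys) ! i) \<and> (\<forall>i<length (xs@ys). c i \<in> \<int>)"
      by (rule exI[of _ ?e], rule conjI[OF e1 e2])
  next
    fix c :: "nat \<Rightarrow> real" assume c: "\<forall>i<length (xs@ys). c i \<in> \<int>"
    have "(\<Sum>i<?m. c i *\<^sub>R xs ! i) \<in> X" using c X by auto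
    moreover have "(\<Sum>j<?k. c (?m + j) *\<^sub>R ys ! j) \<in> Y" using c Y by auto
    ultimately show "(\<Sum>i<length (xs@ys). c i *\<^sub>R (xs@ys) ! i) \<in> osum X Y"
      unfolding split osum_def by blast
  qed
  thus ?thesis using dist ind(1) unfolding lattice_basis_def by simp
qed

lemma iso_osum:
  fixes X Y :: "'a::euclidean_space set"
  assumes xs: "lattice_basis xs X" and ys: "lattice_basis ys Y" and o: "orth X Y"
  shows "lattice_iso (osum X Y) (lattice_dsum X Y)"
proof -
  let ?S = "set xs" and ?T = "set ys"
  have o2: "inner x y = 0" if "x \<in> span ?S" "y \<in> span ?T" for x y
    by (rule orth_span[OF o]) (use that span_mono[OF lb_set[OF xs]] span_mono[OF lb_set[OF ys]] in blast)+
  have ind: "independent (?S \<union> ?T)" "?S \<inter> ?T = {}"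
    using indep_union[of "?S" "?T", OF _ _ finite_set finite_set o2] xs ys unfolding lattice_basis_def by blast+
  obtain f :: "'a \<Rightarrow> 'a \<times> 'a" where f: "linear f" "\<forall>x\<in>?S \<union> ?T. f x = (if x \<in> ?S then (x, 0) else (0, x))"
    using linear_independent_extend[OF ind(1), of "\<lambda>x. if x \<in> ?S then (x, 0) else (0, x)"] by blast
  have l1: "linear (\<lambda>p::'a. (p, 0::'a))" by (rule linearI) auto
  have l2: "linear (\<lambda>p::'a. (0::'a, p))" by (rule linearI) auto
  have fS: "f p = (p, 0)" if "p \<in> span ?S" for p
    by (rule linear_eq_on_span[OF f(1) l1 _ that]) (use f(2) in auto)
  have fT: "f q = (0, q)" if "q \<in> span ?T" for q
    by (rule linear_eq_on_span[OF f(1) l2 _ that]) (use f(2) ind(2) in auto)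
  have fpq: "f (p + q) = (p, q)" if "p \<in> span ?S" "q \<in> span ?T" for p q
    using fS[OF that(1)] fT[OF that(2)] linear_add[OF f(1)] by simp
  have cat: "lattice_basis (xs @ ys) (osum X Y)" by (rule lb_cat[OF xs ys o])
  have sp: "span (osum X Y) = span (?S \<union> ?T)" using lb_span[OF cat] by simp
  have nrm: "\<forall>z\<in>span (osum X Y). norm (f z) = norm z"
  proof
    fix z assume "z \<in> span (osum X Y)"
    then obtain p q where pq: "z = p + q" "p \<in> span ?S" "q \<in> span ?T"
      unfolding sp span_Un by blast
    show "norm (f z) = norm z"
      unfolding pq(1) fpq[OF pq(2,3)] norm_Pair norm_add_orth[OF o2[OF pq(2,3)]] ..
  qed
  have XS: "X \<subseteq> span ?S" using lb_sub_span[OF xs] .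
  have YT: "Y \<subseteq> span ?T" using lb_sub_span[OF ys] .
  have i1: "f ` osum X Y \<subseteq> X \<times> Y"
  proof
    fix w assume "w \<in> f ` osum X Y"
    then obtain z where w: "w = f z" "z \<in> osum X Y" by blast
    then obtain x y where z: "z = x + y" "x \<in> X" "y \<in> Y" unfolding osum_def by blast
    have "f z = (x, y)" unfolding z(1) by (rule fpq) (use z XS YT in blast)+
    thus "w \<in> X \<times> Y" using z w by auto
  qed
  have i2: "X \<times> Y \<subseteq> f ` osum X Y"
  proof clarify
    fix x y assume "x \<in> X" "y \<in> Y"
    hence "f (x + y) = (x, y)" by (intro fpq) (use XS YT in blast)+
    moreover have "x + y \<in> osum X Y" using \<open>x \<in> X\<close> \<open>y \<in> Y\<close> unfolding osum_def by blast
    ultimately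
    show "(x, y) \<in> f ` osum X Y" by (metis image_eqI)
  qed
  have fim: "f ` osum X Y = X \<times> Y" using i1 i2 by (rule antisym)
  show ?thesis unfolding lattice_iso_def lattice_dsum_def
    by (rule exI[of _ f]) (intro conjI f(1) nrm fim)
qed

lemma osum_assoc: "osum (osum X Y) Z = osum X (osum Y Z)"
proof (rule Set.set_eqI, rule iffI)
  fix w assume "w \<in> osum (osum X Y) Z"
  then obtain x y z where w: "w = (x + y) + z" "x \<in> X" "y \<in> Y" "z \<in> Z" unfolding osum_def by blast
  have e: "w = x + (y + z)" using w(1) by (simp add: add.assoc)
  have "y + z \<in> osum Y Z" using w unfolding osum_def by blast
  thus "w \<in> osum X (osum Y Z)" using e w(2) unfolding osum_def by blast
next
  fix w assume "w \<in> osum X (osum Y Z)"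
  then obtain x y z where w: "w = x + (y + z)" "x \<in> X" "y \<in> Y" "z \<in> Z" unfolding osum_def by blast
  have e: "w = (x + y) + z" using w(1) by (simp add: add.assoc)
  have "x + y \<in> osum X Y" using w unfolding osum_def by blast
  thus "w \<in> osum (osum X Y) Z" using e w(4) unfolding osum_def by blast
qed

lemma osum_comm_sub: "osum X Y \<subseteq> osum Y X"
proof
  fix w assume "w \<in> osum X Y"
  then obtain x y where w: "w = x + y" "x \<in> X" "y \<in> Y" unfolding osum_def by blast
  have e: "w = y + x" using w(1) by (simp add: add.commute)
  thus "w \<in> osum Y X" using w unfolding osum_def by blast
qed

lemma osum_comm: "osum X Y = osum Y X"
  by (rule antisym) (rule osum_comm_sub)+

lemma osum_zero: "osum {0} X = X"
  unfolding osum_def by simp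

lemma osum_sub1: "0 \<in> Y \<Longrightarrow> X \<subseteq> osum X Y"
proof
  fix x assume "0 \<in> Y" "x \<in> X"
  moreover have "x = x + 0" by simp
  ultimately show "x \<in> osum X Y" unfolding osum_def by blast
qed

lemma orth_comm: "orth X Y \<Longrightarrow> orth Y X"
  unfolding orth_def by (metis inner_commute)

lemma orth_osum_left: "orth X Z \<Longrightarrow> orth Y Z \<Longrightarrow> orth (osum X Y) Z"
  unfolding orth_def osum_def by (auto simp: inner_add_left)

lemma orth_mono: "orth X Y \<Longrightarrow> X' \<subseteq> X \<Longrightarrow> Y' \<subseteq> Y \<Longrightarrow> orth X' Y'"
  unfolding orth_def by blast

lemma lb_empty: "lattice_basis [] {0}"
  unfolding lattice_basis_def by (auto simp: independent_empty)

lemma is_lattice_zero: "is_lattice {0}"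
  unfolding is_lattice_def using lb_empty by blast

lemma is_lattice_osum: "is_lattice X \<Longrightarrow> is_lattice Y \<Longrightarrow> orth X Y \<Longrightarrow> is_lattice (osum X Y)"
  unfolding is_lattice_def using lb_cat by blast

lemma is_lattice_zero_mem: "is_lattice X \<Longrightarrow> 0 \<in> X"
  unfolding is_lattice_def using lb_zero by blast

lemma dim_osum: "is_lattice X \<Longrightarrow> is_lattice Y \<Longrightarrow> orth X Y \<Longrightarrow> dim (osum X Y) = dim X + dim Y"
  unfolding is_lattice_def using lb_cat lb_dim by (metis length_append)

lemma polar: "inner x y = ((norm (x + y))\<^sup>2 - (norm x)\<^sup>2 - (norm y)\<^sup>2) / 2"
  by (simp add: power2_norm_eq_inner inner_add_left inner_add_right inner_commute)

lemma decomp_pull: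
  fixes B :: "'a::euclidean_space set"
  assumes bB: "is_lattice B" and dec: "decomposable B"
  shows "\<exists>B1 B2. is_lattice B1 \<and> is_lattice B2 \<and> orth B1 B2 \<and> B = osum B1 B2 \<and> B2 \<noteq> {0} \<and> dim B2 < dim B"
proof -
  obtain M1 M2 :: "'a set" where M: "is_lattice M1" "is_lattice M2" "M1 \<noteq> {0}" "M2 \<noteq> {0}"
     "lattice_rank M2 < lattice_rank B" "lattice_iso B (lattice_dsum M1 M2)"
    using dec unfolding decomposable_def by blast
  obtain f :: "'a \<Rightarrow> 'a \<times> 'a" where f: "linear f" "\<forall>x\<in>span B. norm (f x) = norm x" "f ` B = M1 \<times> M2"
    using M(6) unfolding lattice_iso_def lattice_dsum_def by blast
  have finj: "inj_on f (span B)"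
  proof (rule inj_onI)
    fix x y assume xy: "x \<in> span B" "y \<in> span B" "f x = f y"
    have "x - y \<in> span B" using xy by (simp add: span_diff)
    hence "norm (f (x - y)) = norm (x - y)" using f(2) by blast
    moreover have "f (x - y) = 0" using xy(3) linear_diff[OF f(1)] by simp
    ultimately show "x = y" by simp
  qed
  obtain g where g: "linear g" "\<forall>v\<in>span B. g (f v) = v"
    using linear_exists_left_inverse_on[OF f(1) subspace_span finj] by blast
  have finner: "inner (f x) (f y) = inner x y" if "x \<in> span B" "y \<in> span B" for x y
  proof -
    have "x + y \<in> span B" using that by (simp add: span_add)
    hence "norm (f (x + y)) = norm (x + y)" using f(2) by blast
    moreover have "f (x + y) = f x + f y" using linear_add[OF f(1)] by simp
    ultimately show ?thesis using polar[of "f x" "f y"] polar[of x y] f(2) that by simp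
  qed
  have fspan: "f ` span B = span (M1 \<times> M2)"
    using linear_span_image[OF f(1), of B] f(3) by simp
  have z1: "0 \<in> M1" and z2: "0 \<in> M2" using M(1,2) is_lattice_zero_mem by auto
  have l1: "linear (\<lambda>p::'a. (p, 0::'a))" by (rule linearI) auto
  have l2: "linear (\<lambda>p::'a. (0::'a, p))" by (rule linearI) auto
  have in1: "(m, 0) \<in> span (M1 \<times> M2)" if "m \<in> span M1" for m
  proof -
    have "(\<lambda>p. (p, 0::'a)) ` M1 \<subseteq> M1 \<times> M2" using z2 by auto
    hence "span ((\<lambda>p. (p, 0::'a)) ` M1) \<subseteq> span (M1 \<times> M2)" by (rule span_mono)
    moreover have "(m, 0) \<in> span ((\<lambda>p. (p, 0::'a)) ` M1)"
      using linear_span_image[OF l1, of M1] that by simp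
    ultimately show ?thesis by blast
  qed
  have in2: "(0, m) \<in> span (M1 \<times> M2)" if "m \<in> span M2" for m
  proof -
    have "(\<lambda>p. (0::'a, p)) ` M2 \<subseteq> M1 \<times> M2" using z1 by auto
    hence "span ((\<lambda>p. (0::'a, p)) ` M2) \<subseteq> span (M1 \<times> M2)" by (rule span_mono)
    moreover have "(0, m) \<in> span ((\<lambda>p. (0::'a, p)) ` M2)"
      using linear_span_image[OF l2, of M2] that by simp
    ultimately show ?thesis by blast
  qed
  define h1 where "h1 = (\<lambda>m. g (m, 0::'a))"
  define h2 where "h2 = (\<lambda>m. g (0::'a, m))"
  have lh1: "linear h1" unfolding h1_def using linear_compose[OF l1 g(1)] by (simp add: o_def)
  have lh2: "linear h2" unfolding h2_def using linear_compose[OF l2 g(1)] by (simp add: o_def)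
  have K1: "h1 m \<in> span B \<and> f (h1 m) = (m, 0)" if mm: "m \<in> span M1" for m
  proof -
    have "(m, 0) \<in> f ` span B" using in1[OF mm] fspan by simp
    then obtain v where v0: "(m, 0) = f v" and v1: "v \<in> span B" by (rule imageE)
    have v: "v \<in> span B" "f v = (m, 0)" using v0 v1 by simp_all
    have "h1 m = g (f v)" unfolding h1_def using v(2) by simp
    hence "h1 m = v" using g(2) v(1) by simp
    thus ?thesis using v by simp
  qed
  have K2: "h2 m \<in> span B \<and> f (h2 m) = (0, m)" if mm: "m \<in> span M2" for m
  proof -
    have "(0, m) \<in> f ` span B" using in2[OF mm] fspan by simp
    then obtain v where v0: "(0, m) = f v" and v1: "v \<in> span B" by (rule imageE)
    have v: "v \<in> span B" "f v = (0, m)" using v0 v1 by simp_all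
    have "h2 m = g (f v)" unfolding h2_def using v(2) by simp
    hence "h2 m = v" using g(2) v(1) by simp
    thus ?thesis using v by simp
  qed
  have inj1: "inj_on h1 (span M1)"
  proof (rule inj_onI)
    fix x y assume "x \<in> span M1" "y \<in> span M1" "h1 x = h1 y"
    note hxy = this(3)
    have "(x, 0::'a) = f (h1 x)" using conjunct2[OF K1[OF \<open>x \<in> span M1\<close>]] by (rule sym)
    also have "\<dots> = f (h1 y)" using hxy by (rule arg_cong)
    also have "\<dots> = (y, 0)" using conjunct2[OF K1[OF \<open>y \<in> span M1\<close>]] .
    finally have "(x, 0::'a) = (y, 0)" .
    thus "x = y" by simp
  qed
  have inj2: "inj_on h2 (span M2)"
  proof (rule inj_onI)
    fix x y assume "x \<in> span M2" "y \<in> span M2" "h2 x = h2 y"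
    note hxy = this(3)
    have "(0::'a, x) = f (h2 x)" using conjunct2[OF K2[OF \<open>x \<in> span M2\<close>]] by (rule sym)
    also have "\<dots> = f (h2 y)" using hxy by (rule arg_cong)
    also have "\<dots> = (0, y)" using conjunct2[OF K2[OF \<open>y \<in> span M2\<close>]] .
    finally have "(0::'a, x) = (0, y)" .
    thus "x = y" by simp
  qed
  obtain ms1 where ms1: "lattice_basis ms1 M1" using M(1) unfolding is_lattice_def by blast
  obtain ms2 where ms2: "lattice_basis ms2 M2" using M(2) unfolding is_lattice_def by blast
  have b1: "lattice_basis (map h1 ms1) (h1 ` M1)" by (rule lb_img[OF ms1 lh1 inj1])
  have b2: "lattice_basis (map h2 ms2) (h2 ` M2)" by (rule lb_img[OF ms2 lh2 inj2])
  have S1: "M1 \<subseteq> span M1" and S2: "M2 \<subseteq> span M2" by (simp_all add: span_superset)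
  have orth12: "orth (h1 ` M1) (h2 ` M2)"
    unfolding orth_def
  proof clarify
    fix a b assume ab: "a \<in> M1" "b \<in> M2"
    have ka: "h1 a \<in> span B \<and> f (h1 a) = (a, 0)" by (rule K1) (use ab S1 in blast)
    have kb: "h2 b \<in> span B \<and> f (h2 b) = (0, b)" by (rule K2) (use ab S2 in blast)
    have "inner (h1 a) (h2 b) = inner (f (h1 a)) (f (h2 b))"
      using finner[of "h1 a" "h2 b"] ka kb by simp
    also have "\<dots> = 0" using ka kb by (simp add: inner_Pair)
    finally show "inner (h1 a) (h2 b) = 0" .
  qed
  have Beq: "B = osum (h1 ` M1) (h2 ` M2)"
  proof (rule Set.set_eqI, rule iffI)
    fix b assume b: "b \<in> B"
    hence "f b \<in> f ` B" by (rule imageI)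
    hence "f b \<in> M1 \<times> M2" unfolding f(3) .
    then obtain m1 m2 where m: "f b = (m1, m2)" "m1 \<in> M1" "m2 \<in> M2" by (cases "f b") auto
    have "b \<in> span B" using b by (rule span_base)
    hence "b = g (f b)" using g(2) by simp
    also have "\<dots> = g ((m1, 0) + (0, m2))" using m by simp
    also have "\<dots> = h1 m1 + h2 m2" unfolding h1_def h2_def by (rule linear_add[OF g(1)])
    finally show "b \<in> osum (h1 ` M1) (h2 ` M2)" unfolding osum_def using m by blast
  next
    fix b assume "b \<in> osum (h1 ` M1) (h2 ` M2)"
    then obtain m1 m2 where m: "b = h1 m1 + h2 m2" "m1 \<in> M1" "m2 \<in> M2" unfolding osum_def by blast
    have "b = g ((m1, 0) + (0, m2))" unfolding m h1_def h2_def by (rule linear_add[OF g(1), symmetric])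
    also have "\<dots> = g (m1, m2)" by simp
    finally have bb: "b = g (m1, m2)" .
    have "(m1, m2) \<in> f ` B" unfolding f(3) using m(2,3) by simp
    then obtain b' where b'0: "(m1, m2) = f b'" and b'1: "b' \<in> B" by (rule imageE)
    have b': "b' \<in> B" "f b' = (m1, m2)" using b'0 b'1 by simp_all
    have "b' \<in> span B" using b'(1) by (rule span_base)
    hence "g (f b') = b'" using g(2) by simp
    thus "b \<in> B" using bb b' by simp
  qed
  have nz: "h2 ` M2 \<noteq> {0}"
  proof
    assume a: "h2 ` M2 = {0}"
    have "\<exists>m\<in>M2. m \<noteq> 0"
    proof (rule ccontr)
      assume "\<not> (\<exists>m\<in>M2. m \<noteq> 0)"
      hence "M2 \<subseteq> {0}" by auto
      hence "M2 = {0}" using z2 by auto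
      thus False using M(4) by simp
    qed
    then obtain m where m: "m \<in> M2" "m \<noteq> 0" by blast
    have "h2 m \<in> h2 ` M2" using m(1) by (rule imageI)
    hence "h2 m = 0" unfolding a by simp
    hence "f (h2 m) = 0" using linear_0[OF f(1)] by simp
    moreover have "m \<in> span M2" using m(1) by (rule span_base)
    hence "f (h2 m) = (0, m)" using K2 by blast
    ultimately show False using m(2) by (simp add: zero_prod_def)
  qed
  have "dim (h2 ` M2) = dim M2" using lb_dim[OF b2] lb_dim[OF ms2] by simp
  hence dlt: "dim (h2 ` M2) < dim B" using M(5) unfolding lattice_rank_def by simp
  have "is_lattice (h1 ` M1)" "is_lattice (h2 ` M2)" using b1 b2 unfolding is_lattice_def by blast+
  thus ?thesis using orth12 Beq nz dlt by (intro exI[of _ "h1 ` M1"] exI[of _ "h2 ` M2"] conjI)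
qed

definition pw :: "'a::euclidean_space list \<Rightarrow> bool" where
  "pw vs \<longleftrightarrow> (\<forall>i<length vs. \<forall>j<length vs. i \<noteq> j \<longrightarrow> inner (vs ! i) (vs ! j) = 0)"

lemma pw_snoc:
  assumes "pw ws" "\<forall>i<length ws. inner (ws ! i) v = 0"
  shows "pw (ws @ [v])"
  unfolding pw_def
proof (intro allI impI)
  fix i j assume ij: "i < length (ws @ [v])" "j < length (ws @ [v])" "i \<noteq> j"
  show "inner ((ws @ [v]) ! i) ((ws @ [v]) ! j) = 0"
  proof (cases "i < length ws")
    case True
    show ?thesis
    proof (cases "j < length ws")
      case True
      thus ?thesis using \<open>i < length ws\<close> ij assms(1) unfolding pw_def by (simp add: nth_append)
    next
      case False
      hence "j = length ws" using ij by simp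
      thus ?thesis using \<open>i < length ws\<close> assms(2) by (simp add: nth_append)
    qed
  next
    case False
    hence i: "i = length ws" using ij by simp
    hence j: "j < length ws" using ij by simp
    have "inner ((ws @ [v]) ! i) ((ws @ [v]) ! j) = inner v (ws ! j)" using i j by (simp add: nth_append)
    also have "\<dots> = 0" using assms(2) j by (simp add: inner_commute)
    finally show ?thesis .
  qed
qed

lemma main_ind:
  fixes L :: "(real^'n) set"
  assumes hyp: "\<forall>(L1::(real^'n) set) (L2::(real^'n) set). is_lattice L1 \<and> is_lattice L2 \<and> L2 \<noteq> {0} \<and>
           indecomposable L2 \<and> lattice_iso L (lattice_dsum L1 L2) \<longrightarrow> lattice_rank L2 = 1"
  shows "\<forall>A C. dim A = k \<longrightarrow> is_lattice A \<longrightarrow> is_lattice C \<longrightarrow> orth A C \<longrightarrow> L = osum A C \<longrightarrow>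
           (\<exists>vs. lattice_basis vs A \<and> pw vs)"
proof (induction k rule: less_induct)
  case (less k)
  show ?case
  proof (intro allI impI)
    fix A C :: "(real^'n) set"
    assume dA: "dim A = k" and lA: "is_lattice A" and lC: "is_lattice C" and oAC: "orth A C"
      and LAC: "L = osum A C"
    show "\<exists>vs. lattice_basis vs A \<and> pw vs"
    proof (cases "A = {0}")
      case True
      thus ?thesis using lb_empty unfolding pw_def by auto
    next
      case False
      define P where "P B \<longleftrightarrow> B \<noteq> {0} \<and> is_lattice B \<and> (\<exists>A'. is_lattice A' \<and> orth A' B \<and> A = osum A' B)"
        for B :: "(real^'n) set"
      have "orth {0} A" unfolding orth_def by simp
      hence PA: "P A" unfolding P_def using False lA is_lattice_zero osum_zero[of A] by metis
      obtain B where PB: "P B" and minB: "\<And>B'. P B' \<Longrightarrow> dim B \<le> dim B'"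
        using ex_has_least_nat[of P A dim] PA by blast
      from PB have Bnz: "B \<noteq> {0}" and lB: "is_lattice B" unfolding P_def by blast+
      from PB obtain A' where lA': "is_lattice A'" and oA'B: "orth A' B" and AA'B: "A = osum A' B"
        unfolding P_def by blast
      have z: "0 \<in> A'" "0 \<in> B" "0 \<in> C" using lA' lB lC is_lattice_zero_mem by auto
      have A'A: "A' \<subseteq> A" using AA'B osum_sub1[OF z(2)] by simp
      have BA: "B \<subseteq> A" using AA'B osum_sub1[OF z(1), of B] osum_comm[of A' B] by simp
      have indec: "indecomposable B"
        unfolding indecomposable_def
      proof
        assume "decomposable B"
        then obtain B1 B2 where BB: "is_lattice B1" "is_lattice B2" "orth B1 B2" "B = osum B1 B2"
          "B2 \<noteq> {0}" "dim B2 < dim B"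
          using decomp_pull[OF lB] by blast
        have z2: "0 \<in> B1" "0 \<in> B2" using BB(1,2) is_lattice_zero_mem by auto
        have B1B: "B1 \<subseteq> B" using BB(4) osum_sub1[OF z2(2)] by simp
        have B2B: "B2 \<subseteq> B" using BB(4) osum_sub1[OF z2(1), of B2] osum_comm[of B1 B2] by simp
        have o1: "orth A' B1" using orth_mono[OF oA'B subset_refl B1B] .
        have o2: "orth (osum A' B1) B2"
          by (rule orth_osum_left[OF orth_mono[OF oA'B subset_refl B2B] BB(3)])
        have "A = osum (osum A' B1) B2" using AA'B BB(4) osum_assoc[of A' B1 B2] by simp
        hence "P B2" unfolding P_def using BB(2,5) is_lattice_osum[OF lA' BB(1) o1] o2 by blast
        hence "dim B \<le> dim B2" by (rule minB)
        thus False using BB(6) by simp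
      qed
      have oA'C: "orth A' C" using orth_mono[OF oAC A'A subset_refl] .
      have oCB: "orth C B" using orth_comm[OF orth_mono[OF oAC BA subset_refl]] .
      have lA'C: "is_lattice (osum A' C)" using is_lattice_osum[OF lA' lC oA'C] .
      have o3: "orth (osum A' C) B" using orth_osum_left[OF oA'B oCB] .
      have Leq: "L = osum (osum A' C) B"
      proof -
        have "L = osum (osum A' B) C" using LAC AA'B by simp
        also have "\<dots> = osum A' (osum B C)" by (rule osum_assoc)
        also have "\<dots> = osum A' (osum C B)" by (simp add: osum_comm[of B C])
        also have "\<dots> = osum (osum A' C) B" by (rule osum_assoc[symmetric])
        finally show ?thesis .
      qed
      obtain bs1 where bs1: "lattice_basis bs1 (osum A' C)" using lA'C unfolding is_lattice_def by blast
      obtain bsB where bsB: "lattice_basis bsB B" using lB unfolding is_lattice_def by blast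
      have iso: "lattice_iso L (lattice_dsum (osum A' C) B)"
        unfolding Leq by (rule iso_osum[OF bs1 bsB o3])
      have "lattice_rank B = 1"
        using hyp lA'C lB Bnz indec iso by blast
      hence dB: "dim B = 1" unfolding lattice_rank_def .
      hence "length bsB = 1" using lb_dim[OF bsB] by simp
      then obtain v where v: "bsB = [v]" by (cases bsB) auto
      have vB: "v \<in> B" using lb_mem[OF bsB, of 0] v by simp
      have "dim A = dim A' + dim B" using AA'B dim_osum[OF lA' lB oA'B] by simp
      hence dlt: "dim A' < k" using dA dB by simp
      have oBC: "orth B C" using orth_mono[OF oAC BA subset_refl] .
      have lBC: "is_lattice (osum B C)" using is_lattice_osum[OF lB lC oBC] .
      have oA'BC: "orth A' (osum B C)"
        by (rule orth_comm[OF orth_osum_left[OF orth_comm[OF oA'B] orth_comm[OF oA'C]]])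
      have L2: "L = osum A' (osum B C)" using LAC AA'B osum_assoc[of A' B C] by simp
      obtain ws where ws: "lattice_basis ws A'" "pw ws"
        using less.IH[OF dlt] lA' lBC oA'BC L2 by blast
      have "\<forall>i<length ws. inner (ws ! i) v = 0"
        using oA'B vB lb_mem[OF ws(1)] unfolding orth_def by blast
      hence "pw (ws @ [v])" using pw_snoc ws(2) by blast
      moreover have "lattice_basis (ws @ [v]) A"
        using lb_cat[OF ws(1) bsB oA'B] v AA'B by simp
      ultimately show ?thesis by blast
    qed
  qed
qed

lemma det_fin_jnf: "det_fin d G = Determinant.det (Matrix.mat d d (\<lambda>(i,j). G i j))"
proof -
  have c: "Matrix.mat d d (\<lambda>(i,j). G i j) \<in> carrier_mat d d" by simp
  show ?thesis
    unfolding det_fin_def det_def'[OF c] atLeast0LessThan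
  proof (rule sum.cong[OF refl])
    fix p assume "p \<in> {p. p permutes {..<d}}"
    hence p: "p permutes {..<d}" by simp
    have "(\<Prod>i<d. G i (p i)) = (\<Prod>i<d. Matrix.mat d d (\<lambda>(i,j). G i j) $$ (i, p i))"
    proof (rule prod.cong[OF refl])
      fix i assume "i \<in> {..<d}"
      hence "i < d" "p i < d" using permutes_in_image[OF p] by auto
      thus "G i (p i) = Matrix.mat d d (\<lambda>(i,j). G i j) $$ (i, p i)" by simp
    qed
    thus "of_int (sign p) * (\<Prod>i<d. G i (p i)) =
          of_int (sign p) * (\<Prod>i<d. Matrix.mat d d (\<lambda>(i,j). G i j) $$ (i, p i))" by simp
  qed
qed

lemma inner_expand:
  fixes vs :: "'a::euclidean_space list"
  assumes "length vs = n" "pw vs"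
  shows "inner (\<Sum>i<n. a i *\<^sub>R vs ! i) (\<Sum>l<n. b l *\<^sub>R vs ! l) = (\<Sum>i<n. a i * b i * (norm (vs ! i))\<^sup>2)"
proof -
  have "inner (\<Sum>i<n. a i *\<^sub>R vs ! i) (\<Sum>l<n. b l *\<^sub>R vs ! l) =
        (\<Sum>i<n. \<Sum>l<n. a i * b l * inner (vs ! i) (vs ! l))"
    unfolding inner_sum_left inner_sum_right by (subst sum.swap) (simp add: mult_ac)
  also have "\<dots> = (\<Sum>i<n. a i * b i * (norm (vs ! i))\<^sup>2)"
  proof (rule sum.cong[OF refl])
    fix i assume i: "i \<in> {..<n}"
    have "(\<Sum>l<n. a i * b l * inner (vs ! i) (vs ! l)) = (\<Sum>l\<in>{..<n}. if l = i then a i * b i * (norm (vs ! i))\<^sup>2 else 0)"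
    proof (rule sum.cong[OF refl])
      fix l assume l: "l \<in> {..<n}"
      show "a i * b l * inner (vs ! i) (vs ! l) = (if l = i then a i * b i * (norm (vs ! i))\<^sup>2 else 0)"
        using assms i l unfolding pw_def by (auto simp: power2_norm_eq_inner)
    qed
    also have "\<dots> = a i * b i * (norm (vs ! i))\<^sup>2" using i by simp
    finally show "(\<Sum>l<n. a i * b l * inner (vs ! i) (vs ! l)) = a i * b i * (norm (vs ! i))\<^sup>2" .
  qed
  finally show ?thesis .
qed

lemma gram_det:
  fixes vs bs :: "'a::euclidean_space list"
  assumes lv: "length vs = n" and pv: "pw vs"
    and u: "\<And>j. j < n \<Longrightarrow> bs ! j = (\<Sum>i<n. u j i *\<^sub>R vs ! i)"
    and ui: "\<And>j i. j < n \<Longrightarrow> i < n \<Longrightarrow> u j i \<in> \<int>"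
  shows "\<exists>d\<in>\<int>. det_fin n (\<lambda>j k. inner (bs ! j) (bs ! k)) = d\<^sup>2 * (\<Prod>i<n. norm (vs ! i))\<^sup>2"
proof -
  define W where "W = Matrix.mat n n (\<lambda>(i,j). u j i * norm (vs ! i))"
  define Uq where "Uq = Matrix.mat n n (\<lambda>(i,j). u j i)"
  have W: "W \<in> carrier_mat n n" and Uq: "Uq \<in> carrier_mat n n" unfolding W_def Uq_def by simp_all
  have GM: "Matrix.mat n n (\<lambda>(j,k). inner (bs ! j) (bs ! k)) = transpose_mat W * W"
  proof (rule eq_matI)
    fix j k assume jk: "j < dim_row (transpose_mat W * W)" "k < dim_col (transpose_mat W * W)"
    hence j: "j < n" and k: "k < n" using W by auto
    have "(transpose_mat W * W) $$ (j, k) = (\<Sum>i\<in>{0..<n}. W $$ (i, j) * W $$ (i, k))"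
      using W j k by (simp add: scalar_prod_def)
    also have "\<dots> = (\<Sum>i<n. u j i * u k i * (norm (vs ! i))\<^sup>2)"
      unfolding atLeast0LessThan
      by (rule sum.cong[OF refl]) (use j k in \<open>simp add: W_def power2_eq_square\<close>)
    also have "\<dots> = inner (bs ! j) (bs ! k)"
      unfolding u[OF j] u[OF k] inner_expand[OF lv pv] ..
    finally show "Matrix.mat n n (\<lambda>(j,k). inner (bs ! j) (bs ! k)) $$ (j, k) = (transpose_mat W * W) $$ (j, k)"
      using j k by simp
  qed (use W in auto)
  have dW: "Determinant.det W = (\<Prod>i<n. norm (vs ! i)) * Determinant.det Uq"
  proof -
    have "Determinant.det W = (\<Sum>p\<in>{p. p permutes {0..<n}}. signof p * (\<Prod>i = 0..<n. W $$ (i, p i)))"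
      by (rule det_def'[OF W])
    also have "\<dots> = (\<Sum>p\<in>{p. p permutes {0..<n}}. (\<Prod>i<n. norm (vs ! i)) * (signof p * (\<Prod>i = 0..<n. Uq $$ (i, p i))))"
    proof (rule sum.cong[OF refl])
      fix p assume "p \<in> {p. p permutes {0..<n}}"
      hence p: "p permutes {0..<n}" by simp
      have "(\<Prod>i = 0..<n. W $$ (i, p i)) = (\<Prod>i = 0..<n. Uq $$ (i, p i) * norm (vs ! i))"
      proof (rule prod.cong[OF refl])
        fix i assume "i \<in> {0..<n}"
        hence "i < n" "p i < n" using permutes_in_image[OF p] by auto
        thus "W $$ (i, p i) = Uq $$ (i, p i) * norm (vs ! i)" unfolding W_def Uq_def by simp
      qed
      also have "\<dots> = (\<Prod>i = 0..<n. Uq $$ (i, p i)) * (\<Prod>i<n. norm (vs ! i))"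
        by (simp add: prod.distrib atLeast0LessThan)
      finally show "signof p * (\<Prod>i = 0..<n. W $$ (i, p i)) =
          (\<Prod>i<n. norm (vs ! i)) * (signof p * (\<Prod>i = 0..<n. Uq $$ (i, p i)))" by simp
    qed
    also have "\<dots> = (\<Prod>i<n. norm (vs ! i)) * Determinant.det Uq"
      by (simp add: det_def'[OF Uq] sum_distrib_left)
    finally show ?thesis .
  qed
  have dU: "Determinant.det Uq \<in> \<int>"
    unfolding det_def'[OF Uq]
  proof (intro Ints_sum Ints_mult Ints_prod)
    fix p i assume p: "p \<in> {p. p permutes {0..<n}}" and i: "i \<in> {0..<n}"
    hence "i < n" "p i < n" using permutes_in_image[of p "{0..<n}"] by auto
    thus "Uq $$ (i, p i) \<in> \<int>" unfolding Uq_def using ui by simp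
  qed (rule Ints_of_int)
  have "det_fin n (\<lambda>j k. inner (bs ! j) (bs ! k)) = Determinant.det (transpose_mat W * W)"
    unfolding det_fin_jnf GM ..
  also have "\<dots> = Determinant.det W * Determinant.det W"
    using det_mult[OF transpose_carrier_mat[THEN iffD2, OF W] W] det_transpose[OF W] by simp
  also have "\<dots> = (Determinant.det Uq)\<^sup>2 * (\<Prod>i<n. norm (vs ! i))\<^sup>2"
    unfolding dW by (simp add: power2_eq_square)
  finally show ?thesis using dU by blast
qed

lemma lb_scale_mem:
  assumes "lattice_basis bs X" "i < length bs" "k \<in> \<int>"
  shows "k *\<^sub>R bs ! i \<in> X"
proof -
  let ?c = "\<lambda>j. if j = i then k else 0"
  have X: "X = {\<Sum>i<length bs. c i *\<^sub>R bs ! i | c. \<forall>i<length bs. c i \<in> \<int>}"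
    using assms(1) unfolding lattice_basis_def by blast
  have "(\<Sum>j<length bs. ?c j *\<^sub>R bs ! j) = (\<Sum>j\<in>{..<length bs}. if j = i then k *\<^sub>R bs ! j else 0)"
    by (rule sum.cong) simp_all
  also have "\<dots> = k *\<^sub>R bs ! i" using assms(2) by (simp add: sum.delta)
  finally have e: "k *\<^sub>R bs ! i = (\<Sum>j<length bs. ?c j *\<^sub>R bs ! j)" by (rule sym)
  have z: "\<forall>j<length bs. ?c j \<in> \<int>" using assms(3) by simp
  show ?thesis unfolding X
    by (rule CollectI, rule exI[of _ ?c], rule conjI[OF e z])
qed

lemma det_fin_one: "det_fin 1 G = G 0 0"
proof -
  have "{p. p permutes {..<Suc 0}} = {id}" by (auto simp: lessThan_Suc permutes_sing)
  thus ?thesis unfolding det_fin_def by (simp add: sign_id)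
qed

lemma det_line:
  fixes v :: "'a::euclidean_space"
  assumes v: "v \<noteq> 0"
  shows "lattice_det {k *\<^sub>R v | k. k \<in> \<int>} = norm v"
proof -
  define Z where "Z = {k *\<^sub>R v | k. k \<in> \<int>}"
  have sing: "{\<Sum>i<length [v]. c i *\<^sub>R [v] ! i | c. \<forall>i<length [v]. c i \<in> \<int>} = Z"
  proof (intro equalityI subsetI)
    fix x assume "x \<in> {\<Sum>i<length [v]. c i *\<^sub>R [v] ! i | c. \<forall>i<length [v]. c i \<in> \<int>}"
    then obtain c :: "nat \<Rightarrow> real" where "x = c 0 *\<^sub>R v" "c 0 \<in> \<int>" by auto
    thus "x \<in> Z" unfolding Z_def by blast
  next
    fix x assume "x \<in> Z"
    then obtain k where k: "x = k *\<^sub>R v" "k \<in> \<int>" unfolding Z_def by blast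
    show "x \<in> {\<Sum>i<length [v]. c i *\<^sub>R [v] ! i | c. \<forall>i<length [v]. c i \<in> \<int>}"
      unfolding mem_Collect_eq by (rule exI[of _ "\<lambda>_. k"]) (use k in simp)
  qed
  have bv: "lattice_basis [v] Z" unfolding lattice_basis_def using sing v by (simp add: dependent_single)
  have vZ: "v \<in> Z" unfolding Z_def by (rule CollectI, rule exI[of _ 1]) simp
  hence Znz: "Z \<noteq> {0}" using v by blast
  define bs where "bs = (SOME bs. lattice_basis bs Z)"
  have bs: "lattice_basis bs Z" unfolding bs_def using bv by (rule someI)
  have "length bs = 1" using lb_dim[OF bs] lb_dim[OF bv] by simp
  then obtain w where w: "bs = [w]" by (cases bs) (auto simp: length_Suc_conv)
  have "w \<in> Z" using lb_mem[OF bs, of 0] w by simp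
  then obtain k where k: "w = k *\<^sub>R v" "k \<in> \<int>" unfolding Z_def by blast
  have "v \<in> {\<Sum>i<length bs. c i *\<^sub>R bs ! i | c. \<forall>i<length bs. c i \<in> \<int>}"
    using vZ bs unfolding lattice_basis_def by blast
  then obtain c :: "nat \<Rightarrow> real" where c: "v = c 0 *\<^sub>R w" "c 0 \<in> \<int>" using w by auto
  have "1 *\<^sub>R v = (c 0 * k) *\<^sub>R v" using c(1) k(1) by simp
  hence ck: "c 0 * k = 1" using v by (metis scaleR_cancel_right)
  obtain a where a: "c 0 = of_int a" using c(2) by (auto elim: Ints_cases)
  obtain b where b: "k = of_int b" using k(2) by (auto elim: Ints_cases)
  have "a * b = 1" using ck a b by (metis of_int_eq_1_iff of_int_mult)
  hence "\<bar>b\<bar> = 1" by (auto simp: zmult_eq_1_iff)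
  hence kabs: "\<bar>k\<bar> = 1" using b by simp
  have "lattice_det Z = sqrt (det_fin 1 (\<lambda>i j. inner (bs ! i) (bs ! j)))"
    unfolding lattice_det_def using Znz \<open>length bs = 1\<close> by (simp add: bs_def[symmetric] Let_def)
  also have "\<dots> = norm w" unfolding det_fin_one w by (simp add: norm_eq_sqrt_inner)
  also have "\<dots> = norm v" using k(1) kabs by simp
  finally show ?thesis unfolding Z_def .
qed

lemma list_span:
  fixes bs :: "'a::euclidean_space list"
  assumes "distinct bs" "x \<in> span (set bs)"
  shows "\<exists>c. x = (\<Sum>i<length bs. c i *\<^sub>R bs ! i)"
proof -
  obtain u where u: "x = (\<Sum>v\<in>set bs. u v *\<^sub>R v)" using assms(2) span_finite[of "set bs"] by auto
  have "(\<Sum>i\<in>{..<length bs}. (\<lambda>v. u v *\<^sub>R v) (bs ! i)) = (\<Sum>v\<in>set bs. u v *\<^sub>R v)"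
    by (rule sum.reindex_bij_betw[OF bij_betw_nth[OF assms(1) refl refl]])
  hence "x = (\<Sum>i<length bs. u (bs ! i) *\<^sub>R bs ! i)" using u by simp
  thus ?thesis by (rule exI[of _ "\<lambda>i. u (bs ! i)"])
qed

lemma coeff_inner:
  fixes vs :: "'a::euclidean_space list"
  assumes "length vs = n" "pw vs" "j < n"
  shows "inner (\<Sum>l<n. c l *\<^sub>R vs ! l) (vs ! j) = c j * (norm (vs ! j))\<^sup>2"
proof -
  have "inner (\<Sum>l<n. c l *\<^sub>R vs ! l) (vs ! j) = (\<Sum>l<n. c l * inner (vs ! l) (vs ! j))"
    by (simp add: inner_sum_left)
  also have "\<dots> = (\<Sum>l\<in>{..<n}. if l = j then c j * (norm (vs ! j))\<^sup>2 else 0)"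
    by (rule sum.cong[OF refl]) (use assms in \<open>auto simp: pw_def power2_norm_eq_inner\<close>)
  also have "\<dots> = c j * (norm (vs ! j))\<^sup>2" using assms(3) by simp
  finally show ?thesis .
qed

theorem corollary2p4:
  fixes L :: "(real^'n) set"
  assumes "is_lattice L"
    and "lattice_rank L = CARD('n)"
    and "stable_lattice L"
    and "\<forall>(L1::(real^'n) set) (L2::(real^'n) set). is_lattice L1 \<and> is_lattice L2 \<and> L2 \<noteq> {0} \<and>
           indecomposable L2 \<and> lattice_iso L (lattice_dsum L1 L2) \<longrightarrow> lattice_rank L2 = 1"
  shows "lattice_iso L (int_lattice :: (real^'n) set)"
proof -
  define n where "n = CARD('n)"
  have lL: "is_lattice L" by fact
  have z0: "orth L {0}" unfolding orth_def by simp
  have LL0: "L = osum L {0}" using osum_zero[of L] osum_comm[of L "{0}"] by simp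
  obtain vs where vs: "lattice_basis vs L" "pw vs"
    using main_ind[OF assms(4), rule_format, OF refl lL is_lattice_zero z0 LL0] by blast
  have lv: "length vs = n" using lb_dim[OF vs(1)] assms(2) unfolding lattice_rank_def n_def by simp
  have Ldef: "L = {\<Sum>i<n. c i *\<^sub>R vs ! i | c. \<forall>i<n. c i \<in> \<int>}"
    using vs(1) lv unfolding lattice_basis_def by simp
  have n1: "0 < n" unfolding n_def by simp
  have vnz: "vs ! i \<noteq> 0" if i: "i < n" for i
  proof
    assume "vs ! i = 0"
    hence "0 \<in> set vs" using i lv nth_mem[of i vs] by simp
    thus False using vs(1) dependent_zero unfolding lattice_basis_def by blast
  qed
  have ge1: "1 \<le> norm (vs ! i)" if i: "i < n" for i
  proof -
    define Z where "Z = {k *\<^sub>R vs ! i | k. k \<in> \<int>}"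
    have ZL: "Z \<subseteq> L" unfolding Z_def using lb_scale_mem[OF vs(1)] i lv by auto
    have "additive_subgroup Z" unfolding additive_subgroup_def Z_def
    proof (intro conjI ballI)
      show "0 \<in> {k *\<^sub>R vs ! i | k. k \<in> \<int>}"
        by (rule CollectI, rule exI[of _ 0]) simp
    next
      fix x y assume "x \<in> {k *\<^sub>R vs ! i | k. k \<in> \<int>}" "y \<in> {k *\<^sub>R vs ! i | k. k \<in> \<int>}"
      then obtain a b where ab: "x = a *\<^sub>R vs ! i" "a \<in> \<int>" "y = b *\<^sub>R vs ! i" "b \<in> \<int>" by blast
      show "x + y \<in> {k *\<^sub>R vs ! i | k. k \<in> \<int>}"
        by (rule CollectI, rule exI[of _ "a + b"]) (use ab in \<open>simp add: scaleR_add_left\<close>)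
    next
      fix x assume "x \<in> {k *\<^sub>R vs ! i | k. k \<in> \<int>}"
      then obtain a where a: "x = a *\<^sub>R vs ! i" "a \<in> \<int>" by blast
      show "- x \<in> {k *\<^sub>R vs ! i | k. k \<in> \<int>}"
        by (rule CollectI, rule exI[of _ "- a"]) (use a in simp)
    qed
    hence "1 \<le> lattice_det Z" using assms(3) ZL unfolding stable_lattice_def by blast
    thus ?thesis using det_line[OF vnz[OF i]] unfolding Z_def by simp
  qed
  define P where "P = (\<Prod>i<n. norm (vs ! i))"
  have P1: "1 \<le> P" unfolding P_def by (rule prod_ge_1) (use ge1 in auto)
  have Lnz: "L \<noteq> {0}"
  proof
    assume "L = {0}"
    hence "vs ! 0 = 0" using lb_mem[OF vs(1), of 0] lv n1 by simp
    thus False using vnz n1 by blast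
  qed
  define bs where "bs = (SOME bs. lattice_basis bs L)"
  have bs: "lattice_basis bs L" unfolding bs_def using lL unfolding is_lattice_def by (rule someI_ex)
  have lb: "length bs = n" using lb_dim[OF bs] lb_dim[OF vs(1)] lv by simp
  have "lattice_det L = 1" using assms(3) unfolding stable_lattice_def by blast
  hence "sqrt (det_fin n (\<lambda>i j. inner (bs ! i) (bs ! j))) = 1"
    unfolding lattice_det_def using Lnz lb by (simp add: bs_def[symmetric] Let_def)
  hence G1: "det_fin n (\<lambda>i j. inner (bs ! i) (bs ! j)) = 1" by simp
  have "\<forall>j. \<exists>c. j < n \<longrightarrow> (bs ! j = (\<Sum>i<n. c i *\<^sub>R vs ! i) \<and> (\<forall>i<n. c i \<in> \<int>))"
  proof
    fix j
    show "\<exists>c. j < n \<longrightarrow> (bs ! j = (\<Sum>i<n. c i *\<^sub>R vs ! i) \<and> (\<forall>i<n. c i \<in> \<int>))"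
    proof (cases "j < n")
      case True
      hence "bs ! j \<in> L" using lb_mem[OF bs] lb by simp
      then obtain c where "bs ! j = (\<Sum>i<n. c i *\<^sub>R vs ! i)" "\<forall>i<n. c i \<in> \<int>"
        using Ldef by blast
      thus ?thesis by blast
    qed simp
  qed
  from choice[OF this] obtain u where u: "\<And>j. j < n \<Longrightarrow> bs ! j = (\<Sum>i<n. u j i *\<^sub>R vs ! i) \<and> (\<forall>i<n. u j i \<in> \<int>)"
    by blast
  obtain d where d: "d \<in> \<int>" "det_fin n (\<lambda>j k. inner (bs ! j) (bs ! k)) = d\<^sup>2 * P\<^sup>2"
    using gram_det[OF lv vs(2), of bs u] u unfolding P_def by blast
  have dP: "d\<^sup>2 * P\<^sup>2 = 1" using d(2) G1 by simp
  hence "d \<noteq> 0" by auto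
  hence "1 \<le> \<bar>d\<bar>" using Ints_nonzero_abs_ge1 d(1) by blast
  hence "1 \<le> \<bar>d\<bar>\<^sup>2" by (rule one_le_power)
  hence d1: "1 \<le> d\<^sup>2" by simp
  have "P\<^sup>2 = 1 * P\<^sup>2" by simp
  also have "\<dots> \<le> d\<^sup>2 * P\<^sup>2" by (rule mult_right_mono[OF d1]) simp
  finally have "P\<^sup>2 \<le> 1\<^sup>2" using dP by simp
  hence Ple: "P \<le> 1" by (rule power2_le_imp_le) simp
  have n1v: "norm (vs ! i) = 1" if i: "i < n" for i
  proof -
    have "P = norm (vs ! i) * (\<Prod>l\<in>{..<n} - {i}. norm (vs ! l))"
      unfolding P_def using i by (simp add: prod.remove)
    moreover have "1 \<le> (\<Prod>l\<in>{..<n} - {i}. norm (vs ! l))" by (rule prod_ge_1) (use ge1 in auto)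
    moreover have "norm (vs ! i) * 1 \<le> norm (vs ! i) * (\<Prod>l\<in>{..<n} - {i}. norm (vs ! l))"
      by (rule mult_left_mono[OF \<open>1 \<le> (\<Prod>l\<in>{..<n} - {i}. norm (vs ! l))\<close>]) simp
    ultimately have "norm (vs ! i) \<le> P" by simp
    thus ?thesis using Ple ge1[OF i] by simp
  qed
  have finU: "finite (UNIV :: 'n set)" by simp
  obtain s where s: "bij_betw s {0..<n} (UNIV :: 'n set)"
    using ex_bij_betw_nat_finite[OF finU] unfolding n_def by blast
  have sinj: "inj_on s {..<n}" using bij_betw_imp_inj_on[OF s] by (simp add: atLeast0LessThan)
  define f where "f = (\<lambda>x::real^'n. \<Sum>i<n. inner x (vs ! i) *\<^sub>R axis (s i) (1::real))"
  have lf: "linear f" unfolding f_def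
    by (rule linearI) (simp_all add: inner_add_left scaleR_add_left sum.distrib scaleR_sum_right)
  have dist: "distinct vs" using vs(1) unfolding lattice_basis_def by simp
  have indep: "independent (set vs)" using vs(1) unfolding lattice_basis_def by simp
  have "dim (set vs) = n" using dim_eq_card_independent[OF indep] distinct_card[OF dist] lv by simp
  hence spanall: "span (set vs) = UNIV" using dim_eq_full[of "set vs"] unfolding n_def by simp
  have rep: "\<exists>c. x = (\<Sum>i<n. c i *\<^sub>R vs ! i)" for x :: "real^'n"
    using list_span[OF dist, of x] spanall lv by simp
  have fc: "f (\<Sum>l<n. c l *\<^sub>R vs ! l) = (\<Sum>i<n. c i *\<^sub>R axis (s i) (1::real))" for c
    unfolding f_def
    by (rule sum.cong[OF refl]) (simp add: coeff_inner[OF lv vs(2)] n1v)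
  define es where "es = map (\<lambda>i. axis (s i) (1::real)) [0..<n]"
  have les: "length es = n" unfolding es_def by simp
  have esi: "es ! i = axis (s i) 1" if "i < n" for i unfolding es_def using that by simp
  have pes: "pw es" unfolding pw_def les
  proof (intro allI impI)
    fix i j assume ij: "i < n" "j < n" "i \<noteq> j"
    hence "s i \<noteq> s j" using sinj by (meson inj_on_contraD lessThan_iff)
    thus "inner (es ! i) (es ! j) = 0" using ij by (simp add: esi inner_axis_axis)
  qed
  have nrm: "norm (f x) = norm x" for x
  proof -
    obtain c where c: "x = (\<Sum>i<n. c i *\<^sub>R vs ! i)" using rep by blast
    have fx: "f x = (\<Sum>i<n. c i *\<^sub>R es ! i)" unfolding c fc
      by (rule sum.cong[OF refl]) (simp add: esi)
    have "inner (f x) (f x) = (\<Sum>i<n. c i * c i * (norm (es ! i))\<^sup>2)"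
      unfolding fx by (rule inner_expand[OF les pes])
    also have "\<dots> = (\<Sum>i<n. c i * c i)" by (rule sum.cong[OF refl]) (simp add: esi power2_norm_eq_inner inner_axis_axis)
    also have "\<dots> = (\<Sum>i<n. c i * c i * (norm (vs ! i))\<^sup>2)" by (rule sum.cong[OF refl]) (simp add: n1v)
    also have "\<dots> = inner x x" unfolding c by (rule inner_expand[OF lv vs(2), symmetric])
    finally show ?thesis by (simp add: norm_eq_sqrt_inner)
  qed
  have comp: "vec_nth (\<Sum>i<n. a i *\<^sub>R axis (s i) (1::real)) k = (\<Sum>i<n. a i * (if k = s i then 1 else 0))" for a k
    by (simp add: sum_component axis_def)
  have img1: "f ` L \<subseteq> int_lattice"
  proof
    fix y assume "y \<in> f ` L"
    then obtain x where x: "x \<in> L" "y = f x" by blast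
    then obtain c where c: "x = (\<Sum>i<n. c i *\<^sub>R vs ! i)" "\<forall>i<n. c i \<in> \<int>" using Ldef by blast
    have "vec_nth y k \<in> \<int>" for k
      unfolding x(2) c(1) fc comp using c(2) by (intro Ints_sum) auto
    thus "y \<in> int_lattice" unfolding int_lattice_def by blast
  qed
  have img2: "int_lattice \<subseteq> f ` L"
  proof
    fix y :: "real^'n" assume "y \<in> int_lattice"
    hence yi: "\<forall>k. vec_nth y k \<in> \<int>" unfolding int_lattice_def by blast
    define x where "x = (\<Sum>i<n. vec_nth y (s i) *\<^sub>R vs ! i)"
    have xL: "x \<in> L" unfolding Ldef x_def mem_Collect_eq
      by (rule exI[of _ "\<lambda>i. vec_nth y (s i)"]) (use yi in simp)
    have "f x = y"
    proof (subst Finite_Cartesian_Product.vec_eq_iff, rule allI)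
      fix k
      have "vec_nth (f x) k = (\<Sum>i<n. vec_nth y (s i) * (if k = s i then 1 else 0))" unfolding x_def fc comp ..
      also have "\<dots> = (\<Sum>i\<in>{0..<n}. (\<lambda>j. vec_nth y j * (if k = j then 1 else 0)) (s i))"
        by (simp add: atLeast0LessThan)
      also have "\<dots> = (\<Sum>j\<in>UNIV. vec_nth y j * (if k = j then 1 else 0))"
        by (rule sum.reindex_bij_betw[OF s])
      also have "\<dots> = vec_nth y k" by (simp add: if_distrib cong: if_cong)
      finally show "vec_nth (f x) k = vec_nth y k" .
    qed
    thus "y \<in> f ` L" using xL by blast
  qed
  show ?thesis unfolding lattice_iso_def
    by (rule exI[of _ f]) (intro conjI lf ballI nrm antisym img1 img2)
qed

end
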